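(* Let $G=(V,E)$ be a finite simple graph with at least one vertex, and let $G'$ be its connection graph. For a simplex $x$ and an integer $k\ge 1$, let $P(k,x)$ be the number of walks of length $k$ in $G'$ starting at $x$. Put $P(k)=\max_x P(k,x)$ and $r_k=1+P(k)^{1/k}$. Then, for every $k\ge 1$, the spectral radius $\rho$ of the Hodge Laplacian $H=(d+d^T)^2$ of $G$ satisfies $$\rho \le r_k-\frac{1}{r_k}.$$ Moreover, $r_k - 1/r_k$ converges, as $k\to\infty$, to the spectral radius of the sign-less Hodge Laplacian $|H|$.
   Context: Let $G=(V,E)$ be a finite simple graph. Its associated $1$-dimensional simplicial complex is the set of simplices $X=\{\{v\}: v\in V\}\cup E$, where each edge is regarded as a $2$-element subset of $V$; put $N=|V|+|E|$ and index $N\times N$ matrices by $X$. The connection graph $G'$ has vertex set $X$, and two distinct $x,y\in X$ are adjacent iff $x\cap y\neq\emptyset$. A walk of length $k$ from $x$ is a sequence $x=x_0,x_1,\dots,x_k$ of vertices of $G'$ in which consecutive entries are adjacent. For the Hodge Laplacian, fix an orientation of each edge; for an edge $x=\{a,b\}$ oriented from $a$ to $b$ set $d(x,\{a\})=-1$, $d(x,\{b\})=1$, and let all other entries of $d$ be $0$. The Hodge Laplacian is $H=(d+d^T)^2$; its spectrum does not depend on the chosen orientation. The sign-less exterior derivative $|d|$ has $|d|(x,y)=1$ if $y\subset x$ and $|x|=|y|+1$, and $0$ otherwise; the sign-less Hodge Laplacian is $|H|=(|d|+|d|^T)^2$. *)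

theory Defs
  imports "HOL-Analysis.Analysis"
begin

definition simple_graph :: "'a set \<Rightarrow> 'a set set \<Rightarrow> bool" where
  "simple_graph V E \<longleftrightarrow> finite V \<and> (\<forall>e\<in>E. e \<subseteq> V \<and> card e = 2)"

definition simplices :: "'a set \<Rightarrow> 'a set set \<Rightarrow> 'a set set" where
  "simplices V E = {{v} | v. v \<in> V} \<union> E"

definition conn_adj :: "'a set \<Rightarrow> 'a set \<Rightarrow> bool" where
  "conn_adj x y \<longleftrightarrow> x \<noteq> y \<and> x \<inter> y \<noteq> {}"

definition walks :: "'a set set \<Rightarrow> nat \<Rightarrow> 'a set \<Rightarrow> 'a set list set" where
  "walks X k x = {w. length w = Suc k \<and> w ! 0 = x \<and> set w \<subseteq> X \<and>
                     (\<forall>i<k. conn_adj (w ! i) (w ! Suc i))}"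

definition num_walks :: "'a set set \<Rightarrow> nat \<Rightarrow> 'a set \<Rightarrow> nat" where
  "num_walks X k x = card (walks X k x)"

definition max_walks :: "'a set set \<Rightarrow> nat \<Rightarrow> nat" where
  "max_walks X k = Max (num_walks X k ` X)"

definition r_seq :: "'a set set \<Rightarrow> nat \<Rightarrow> real" where
  "r_seq X k = 1 + root k (real (max_walks X k))"

definition mat_mult :: "'b set \<Rightarrow> ('b \<Rightarrow> 'b \<Rightarrow> real) \<Rightarrow> ('b \<Rightarrow> 'b \<Rightarrow> real) \<Rightarrow> 'b \<Rightarrow> 'b \<Rightarrow> real" where
  "mat_mult X A B = (\<lambda>x y. \<Sum>z\<in>X. A x z * B z y)"

definition mat_transpose :: "('b \<Rightarrow> 'b \<Rightarrow> real) \<Rightarrow> 'b \<Rightarrow> 'b \<Rightarrow> real" where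
  "mat_transpose A = (\<lambda>x y. A y x)"

definition mat_add :: "('b \<Rightarrow> 'b \<Rightarrow> real) \<Rightarrow> ('b \<Rightarrow> 'b \<Rightarrow> real) \<Rightarrow> 'b \<Rightarrow> 'b \<Rightarrow> real" where
  "mat_add A B = (\<lambda>x y. A x y + B x y)"

definition is_eigenvalue :: "'b set \<Rightarrow> ('b \<Rightarrow> 'b \<Rightarrow> real) \<Rightarrow> complex \<Rightarrow> bool" where
  "is_eigenvalue X A l \<longleftrightarrow> (\<exists>v :: 'b \<Rightarrow> complex. (\<exists>x\<in>X. v x \<noteq> 0) \<and>
      (\<forall>x\<in>X. (\<Sum>y\<in>X. complex_of_real (A x y) * v y) = l * v x))"

definition spectral_radius :: "'b set \<Rightarrow> ('b \<Rightarrow> 'b \<Rightarrow> real) \<Rightarrow> real" where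
  "spectral_radius X A = Max {cmod l | l. is_eigenvalue X A l}"

text \<open>Exterior derivative for an orientation given by head: edge x is oriented
  from its other endpoint to head x.  d(x,{a}) = -1, d(x,{head x}) = 1.\<close>
definition ext_d :: "('a set \<Rightarrow> 'a) \<Rightarrow> 'a set \<Rightarrow> 'a set \<Rightarrow> real" where
  "ext_d head x y = (if card x = 2 \<and> card y = 1 \<and> y \<subseteq> x
                     then (if y = {head x} then 1 else -1) else 0)"

definition abs_d :: "'a set \<Rightarrow> 'a set \<Rightarrow> real" where
  "abs_d x y = (if y \<subseteq> x \<and> card x = card y + 1 then 1 else 0)"

definition hodge :: "'a set set \<Rightarrow> ('a set \<Rightarrow> 'a) \<Rightarrow> 'a set \<Rightarrow> 'a set \<Rightarrow> real" where
  "hodge X head = (let D = mat_add (ext_d head) (mat_transpose (ext_d head)) in mat_mult X D D)"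

definition abs_hodge :: "'a set set \<Rightarrow> 'a set \<Rightarrow> 'a set \<Rightarrow> real" where
  "abs_hodge X = (let D = mat_add abs_d (mat_transpose abs_d) in mat_mult X D D)"

end

theory Submission imports Defs "Jordan_Normal_Form.Char_Poly" begin


definition mv :: "'b set \<Rightarrow> ('b \<Rightarrow> 'b \<Rightarrow> real) \<Rightarrow> ('b \<Rightarrow> real) \<Rightarrow> 'b \<Rightarrow> real" where
  "mv X M v = (\<lambda>x. \<Sum>y\<in>X. M x y * v y)"
definition ip :: "'b set \<Rightarrow> ('b \<Rightarrow> real) \<Rightarrow> ('b \<Rightarrow> real) \<Rightarrow> real" where
  "ip X u v = (\<Sum>x\<in>X. u x * v x)"
definition symm :: "'b set \<Rightarrow> ('b \<Rightarrow> 'b \<Rightarrow> real) \<Rightarrow> bool" where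
  "symm X M \<longleftrightarrow> (\<forall>x\<in>X. \<forall>y\<in>X. M x y = M y x)"
definition nonneg :: "'b set \<Rightarrow> ('b \<Rightarrow> 'b \<Rightarrow> real) \<Rightarrow> bool" where
  "nonneg X M \<longleftrightarrow> (\<forall>x\<in>X. \<forall>y\<in>X. M x y \<ge> 0)"
definition lmax :: "'b set \<Rightarrow> ('b \<Rightarrow> 'b \<Rightarrow> real) \<Rightarrow> real" where
  "lmax X M = Sup ((\<lambda>v. ip X v (mv X M v)) ` {v. ip X v v = 1})"

lemma ip_comm: "ip X u v = ip X v u" by (simp add: ip_def mult.commute)
lemma ip_add_r: "ip X u (\<lambda>x. v x + w x) = ip X u v + ip X u w"
  by (simp add: ip_def distrib_left sum.distrib)
lemma ip_add_l: "ip X (\<lambda>x. v x + w x) u = ip X v u + ip X w u"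
  by (simp add: ip_def distrib_right sum.distrib)
lemma ip_scale_r: "ip X u (\<lambda>x. c * v x) = c * ip X u v"
  by (simp add: ip_def sum_distrib_left algebra_simps)
lemma ip_scale_l: "ip X (\<lambda>x. c * v x) u = c * ip X v u"
  by (simp add: ip_def sum_distrib_left algebra_simps)
lemma mv_add: "mv X M (\<lambda>x. v x + w x) = (\<lambda>x. mv X M v x + mv X M w x)"
  by (simp add: mv_def distrib_left sum.distrib)
lemma mv_scale: "mv X M (\<lambda>x. c * v x) = (\<lambda>x. c * mv X M v x)"
  by (rule ext) (simp add: mv_def sum_distrib_left algebra_simps)
lemma mv_cong: "(\<And>y. y \<in> X \<Longrightarrow> v y = w y) \<Longrightarrow> mv X M v x = mv X M w x"
  by (simp add: mv_def)
lemma ip_cong: "(\<And>y. y \<in> X \<Longrightarrow> u y = u' y) \<Longrightarrow> (\<And>y. y \<in> X \<Longrightarrow> v y = v' y) \<Longrightarrow> ip X u v = ip X u' v'"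
  by (simp add: ip_def)

lemma ip_mv_symm: assumes "symm X M" shows "ip X u (mv X M w) = ip X w (mv X M u)"
proof -
  have "ip X u (mv X M w) = (\<Sum>x\<in>X. \<Sum>y\<in>X. u x * M x y * w y)"
    by (simp add: ip_def mv_def sum_distrib_left mult.assoc)
  also have "\<dots> = (\<Sum>y\<in>X. \<Sum>x\<in>X. u x * M x y * w y)" by (rule sum.swap)
  also have "\<dots> = (\<Sum>y\<in>X. \<Sum>x\<in>X. w y * M y x * u x)"
    using assms by (intro sum.cong refl) (auto simp: symm_def)
  also have "\<dots> = ip X w (mv X M u)"
    by (simp add: ip_def mv_def sum_distrib_left mult.assoc)
  finally show ?thesis .
qed

lemma qf_expand: assumes "symm X M"
  shows "ip X (\<lambda>x. u x + t * w x) (mv X M (\<lambda>x. u x + t * w x)) =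
     ip X u (mv X M u) + 2*t*ip X w (mv X M u) + t^2 * ip X w (mv X M w)"
  using ip_mv_symm[OF assms, of u w]
  by (simp add: mv_add mv_scale ip_add_l ip_add_r ip_scale_l ip_scale_r power2_eq_square algebra_simps)

lemma nsq_expand:
  "ip X (\<lambda>x. u x + t * w x) (\<lambda>x. u x + t * w x) = ip X u u + 2*t*ip X w u + t^2 * ip X w w"
  using ip_comm[of X u w]
  by (simp add: ip_add_l ip_add_r ip_scale_l ip_scale_r power2_eq_square algebra_simps)

lemma nsq_nonneg: "ip X v v \<ge> 0" by (simp add: ip_def sum_nonneg)

lemma nsq_zero: assumes "finite X" "ip X v v = 0" "x \<in> X" shows "v x = 0"
proof -
  have "\<forall>x\<in>X. v x * v x = 0" using assms sum_nonneg_eq_0_iff[of X "\<lambda>x. v x * v x"]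
    by (simp add: ip_def)
  thus ?thesis using assms(3) by simp
qed

lemma nsq_pos: assumes "finite X" "x \<in> X" "v x \<noteq> 0" shows "ip X v v > 0"
proof -
  have "ip X v v \<noteq> 0" using nsq_zero[OF assms(1) _ assms(2), of v] assms(3) by blast
  thus ?thesis using nsq_nonneg[of X v] by linarith
qed

lemma qf_double: "ip X v (mv X M v) = (\<Sum>x\<in>X. \<Sum>y\<in>X. v x * M x y * v y)"
  by (simp add: ip_def mv_def sum_distrib_left mult.assoc)



lemma rayleigh_exists:
  fixes X :: "'b set" and M :: "'b \<Rightarrow> 'b \<Rightarrow> real"
  assumes fin: "finite X" and ne: "X \<noteq> {}"
  shows "\<exists>u. ip X u u = 1 \<and> (\<forall>v. ip X v v = 1 \<longrightarrow> ip X v (mv X M v) \<le> ip X u (mv X M u))"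
proof -
  define T where "T = product_topology (\<lambda>_::'b. euclideanreal) X"
  define q where "q = (\<lambda>v. ip X v (mv X M v))"
  define n where "n = (\<lambda>v. ip X v v)"
  have proj: "continuous_map T euclideanreal (\<lambda>v. v k)" if "k \<in> X" for k
    using continuous_map_product_projection[of k X "\<lambda>_. euclideanreal"] that
    unfolding T_def by simp
  have cn: "continuous_map T euclideanreal n"
    unfolding n_def ip_def
    by (intro continuous_map_sum fin continuous_map_real_mult proj)
  have cq: "continuous_map T euclideanreal q"
    unfolding q_def ip_def mv_def
    by (intro continuous_map_sum fin continuous_map_real_mult continuous_map_real_mult_left proj) auto
  define K where "K = PiE X (\<lambda>_. {-1..1::real})"
  have cK: "compactin T K"
    unfolding T_def K_def by (simp add: compactin_PiE compactin_euclidean_iff)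
  define C where "C = {v \<in> topspace T. n v \<in> {1}}"
  have clC: "closedin T C" unfolding C_def
    by (rule closedin_continuous_map_preimage[OF cn]) simp
  define S where "S = K \<inter> C"
  have cS: "compactin T S" unfolding S_def using compact_Int_closedin[OF cK clC] .
  have cqS: "compact (q ` S)" using image_compactin[OF cS cq] by (simp add: compactin_euclidean_iff)
  obtain x0 where x0: "x0 \<in> X" using ne by blast
  define e where "e = restrict (\<lambda>y. if y = x0 then 1 else 0::real) X"
  have "(\<Sum>x\<in>X. e x * e x) = (\<Sum>x\<in>X. if x = x0 then 1 else 0)"
    by (rule sum.cong) (auto simp: e_def)
  hence "n e = 1" unfolding n_def ip_def using fin x0 by simp
  moreover have "e \<in> K" unfolding K_def e_def by auto
  moreover have "e \<in> topspace T" unfolding T_def e_def by simp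
  ultimately have "e \<in> S" unfolding S_def C_def by simp
  hence "q ` S \<noteq> {}" by blast
  then obtain s where s: "s \<in> q ` S" "\<forall>t\<in>q ` S. t \<le> s" using compact_attains_sup[OF cqS] by blast
  then obtain u where u: "u \<in> S" "s = q u" by blast
  have nu: "n u = 1" using u unfolding S_def C_def by simp
  have "ip X v (mv X M v) \<le> ip X u (mv X M u)" if nv: "ip X v v = 1" for v
  proof -
    define v' where "v' = restrict v X"
    have "\<bar>v x\<bar> \<le> 1" if "x \<in> X" for x
    proof -
      have "v x * v x \<le> ip X v v" unfolding ip_def
        by (rule member_le_sum) (use that fin in auto)
      thus ?thesis using nv abs_square_le_1[of "v x"] by (simp add: power2_eq_square)
    qed
    hence "v' \<in> K" unfolding K_def v'_def by (auto simp: abs_le_iff)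
    moreover have "v' \<in> topspace T" unfolding T_def v'_def by simp
    moreover have "n v' = 1" using nv unfolding n_def v'_def by (simp add: ip_def)
    ultimately have "v' \<in> S" unfolding S_def C_def by simp
    hence "q v' \<le> q u" using s(2) u(2) by (metis image_eqI)
    moreover have "q v' = q v" unfolding q_def v'_def
      by (intro ip_cong) (auto intro: mv_cong)
    ultimately show ?thesis unfolding q_def by simp
  qed
  thus ?thesis using nu unfolding n_def by blast
qed



lemma qf_zero: assumes "finite X" "ip X v v = 0" shows "ip X v (mv X M v) = 0"
  using nsq_zero[OF assms] by (simp add: qf_double)

lemma lmax_props:
  assumes fin: "finite X" and ne: "X \<noteq> {}"
  shows "(\<forall>v. ip X v (mv X M v) \<le> lmax X M * ip X v v) \<and> (\<exists>u. ip X u u = 1 \<and> ip X u (mv X M u) = lmax X M)"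
proof -
  obtain u where u: "ip X u u = 1" "\<forall>v. ip X v v = 1 \<longrightarrow> ip X v (mv X M v) \<le> ip X u (mv X M u)"
    using rayleigh_exists[OF fin ne, of M] by blast
  have lm: "lmax X M = ip X u (mv X M u)" unfolding lmax_def
    by (rule cSup_eq_maximum) (use u in auto)
  have "ip X v (mv X M v) \<le> lmax X M * ip X v v" for v
  proof (cases "ip X v v = 0")
    case True thus ?thesis using qf_zero[OF fin True] by simp
  next
    case False
    hence pos: "ip X v v > 0" using nsq_nonneg[of X v] by linarith
    define c where "c = sqrt (ip X v v)"
    have c: "c > 0" "c^2 = ip X v v" using pos unfolding c_def by auto
    define w where "w = (\<lambda>x. (1/c) * v x)"
    have nw: "ip X w w = (1/c)^2 * ip X v v" unfolding w_def
      by (simp only: ip_scale_l ip_scale_r) (simp add: power2_eq_square)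
    have qw: "ip X w (mv X M w) = (1/c)^2 * ip X v (mv X M v)" unfolding w_def
      by (simp only: mv_scale ip_scale_l ip_scale_r) (simp add: power2_eq_square)
    have "ip X w w = 1" using nw c pos by (simp add: field_simps)
    hence "ip X w (mv X M w) \<le> lmax X M" using u(2) lm by simp
    hence "(1/c)^2 * ip X v (mv X M v) \<le> lmax X M" using qw by simp
    thus ?thesis using c pos by (simp add: field_simps)
  qed
  thus ?thesis using u lm by auto
qed

lemma stationary:
  assumes fin: "finite X" and sy: "symm X M"
    and le: "\<forall>v. ip X v (mv X M v) \<le> lm * ip X v v"
    and eq: "ip X u (mv X M u) = lm * ip X u u"
  shows "\<forall>x\<in>X. mv X M u x = lm * u x"
proof -
  define g where "g = (\<lambda>x. mv X M u x + (-lm) * u x)"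
  define a where "a = ip X g g"
  define c where "c = ip X g (mv X M g) - lm * ip X g g"
  have "ip X g g = ip X g (\<lambda>x. mv X M u x + (-lm) * u x)" using g_def by (rule arg_cong)
  also have "\<dots> = ip X g (mv X M u) + (-lm) * ip X g u" by (simp only: ip_add_r ip_scale_r)
  finally have key: "ip X g (mv X M u) - lm * ip X g u = a" unfolding a_def by simp
  have ineq: "2*t*a + t^2*c \<le> 0" for t
  proof -
    have "ip X (\<lambda>x. u x + t * g x) (mv X M (\<lambda>x. u x + t * g x)) \<le> lm * ip X (\<lambda>x. u x + t * g x) (\<lambda>x. u x + t * g x)"
      using le by blast
    hence "ip X u (mv X M u) + 2*t*ip X g (mv X M u) + t^2 * ip X g (mv X M g)
       \<le> lm * (ip X u u + 2*t*ip X g u + t^2 * ip X g g)"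
      by (simp only: qf_expand[OF sy] nsq_expand)
    thus ?thesis using eq key unfolding c_def by (simp add: algebra_simps)
  qed
  have a0: "a = 0"
  proof (rule ccontr)
    assume "a \<noteq> 0"
    hence apos: "a > 0" using nsq_nonneg[of X g] unfolding a_def by linarith
    define t where "t = a / (\<bar>c\<bar> + 1)"
    have tpos: "t > 0" unfolding t_def using apos by (simp add: add_pos_nonneg)
    have "t * \<bar>c\<bar> < a" unfolding t_def using apos
      by (simp add: field_simps add_pos_nonneg)
    moreover have "t * (-\<bar>c\<bar>) \<le> t * c" using tpos by (intro mult_left_mono) auto
    ultimately have "t * c > - a" by simp
    hence "2*a + t*c > 0" using apos by linarith
    hence "t * (2*a + t*c) > 0" using tpos by simp
    thus False using ineq[of t] by (simp add: power2_eq_square algebra_simps)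
  qed
  show ?thesis
  proof
    fix x assume "x \<in> X"
    hence "g x = 0" using nsq_zero[OF fin _ , of g x] a0 unfolding a_def by simp
    thus "mv X M u x = lm * u x" unfolding g_def by simp
  qed
qed

lemma nonneg_qf:
  assumes "nonneg X M"
  shows "\<bar>ip X v (mv X M v)\<bar> \<le> ip X (\<lambda>x. \<bar>v x\<bar>) (mv X M (\<lambda>x. \<bar>v x\<bar>))"
proof -
  have "\<bar>\<Sum>x\<in>X. \<Sum>y\<in>X. v x * M x y * v y\<bar> \<le> (\<Sum>x\<in>X. \<bar>\<Sum>y\<in>X. v x * M x y * v y\<bar>)"
    by (rule sum_abs)
  also have "\<dots> \<le> (\<Sum>x\<in>X. \<Sum>y\<in>X. \<bar>v x * M x y * v y\<bar>)"
    by (intro sum_mono sum_abs)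
  also have "\<dots> = (\<Sum>x\<in>X. \<Sum>y\<in>X. \<bar>v x\<bar> * M x y * \<bar>v y\<bar>)"
    using assms by (intro sum.cong refl) (auto simp: nonneg_def abs_mult)
  finally show ?thesis by (simp add: qf_double)
qed

lemma nsq_abs: "ip X (\<lambda>x. \<bar>v x\<bar>) (\<lambda>x. \<bar>v x\<bar>) = ip X v v"
  by (simp add: ip_def abs_mult_self_eq)

lemma sym_eig:
  assumes "finite X" "X \<noteq> {}" "symm X M"
  shows "\<exists>u. ip X u u = 1 \<and> (\<forall>x\<in>X. mv X M u x = lmax X M * u x)"
proof -
  from lmax_props[OF assms(1,2), of M] obtain u where
    "\<forall>v. ip X v (mv X M v) \<le> lmax X M * ip X v v" "ip X u u = 1" "ip X u (mv X M u) = lmax X M"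
    by blast
  thus ?thesis using stationary[OF assms(1,3), of "lmax X M" u] by auto
qed

lemma nonneg_eig:
  assumes "finite X" "X \<noteq> {}" "symm X M" "nonneg X M"
  shows "\<exists>u. ip X u u = 1 \<and> (\<forall>x. u x \<ge> 0) \<and> (\<forall>x\<in>X. mv X M u x = lmax X M * u x)"
    and "\<forall>v. \<bar>ip X v (mv X M v)\<bar> \<le> lmax X M * ip X v v"
    and "lmax X M \<ge> 0"
proof -
  from lmax_props[OF assms(1,2), of M] obtain u where
    le: "\<forall>v. ip X v (mv X M v) \<le> lmax X M * ip X v v" and u: "ip X u u = 1" "ip X u (mv X M u) = lmax X M"
    by blast
  define u' where "u' = (\<lambda>x. \<bar>u x\<bar>)"
  have n': "ip X u' u' = 1" using u unfolding u'_def by (simp add: nsq_abs)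
  have "ip X u' (mv X M u') \<ge> lmax X M" using nonneg_qf[OF assms(4), of u] u unfolding u'_def by simp
  moreover have "ip X u' (mv X M u') \<le> lmax X M" using le n' by (metis mult.right_neutral)
  ultimately have "ip X u' (mv X M u') = lmax X M * ip X u' u'" using n' by simp
  hence "\<forall>x\<in>X. mv X M u' x = lmax X M * u' x" using stationary[OF assms(1,3) le] by blast
  thus "\<exists>u. ip X u u = 1 \<and> (\<forall>x. u x \<ge> 0) \<and> (\<forall>x\<in>X. mv X M u x = lmax X M * u x)"
    using n' unfolding u'_def by auto
  show ab: "\<forall>v. \<bar>ip X v (mv X M v)\<bar> \<le> lmax X M * ip X v v"
  proof
    fix v
    have "\<bar>ip X v (mv X M v)\<bar> \<le> ip X (\<lambda>x. \<bar>v x\<bar>) (mv X M (\<lambda>x. \<bar>v x\<bar>))" by (rule nonneg_qf[OF assms(4)])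
    also have "\<dots> \<le> lmax X M * ip X v v" using le nsq_abs[of X v] by metis
    finally show "\<bar>ip X v (mv X M v)\<bar> \<le> lmax X M * ip X v v" .
  qed
  show "lmax X M \<ge> 0" using ab u by (metis abs_ge_zero mult.right_neutral order_trans)
qed



lemma eig_finite: assumes fin: "finite X" shows "finite {l. is_eigenvalue X A l}"
proof -
  obtain f where f0: "bij_betw f {0..<card X} X" using ex_bij_betw_nat_finite[OF fin] by blast
  define n where "n = card X"
  have f: "bij_betw f {0..<n} X" using f0 unfolding n_def .
  define B where "B = mat n n (\<lambda>(i,j). complex_of_real (A (f i) (f j)))"
  have Bc: "B \<in> carrier_mat n n" by (simp add: B_def)
  have "poly (char_poly B) l = 0" if "is_eigenvalue X A l" for l
  proof -
    have "\<exists>v. (\<exists>x\<in>X. v x \<noteq> 0) \<and> (\<forall>x\<in>X. (\<Sum>y\<in>X. complex_of_real (A x y) * v y) = l * v x)"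
      using that unfolding is_eigenvalue_def by assumption
    then obtain v where v: "\<exists>x\<in>X. v x \<noteq> 0" "\<forall>x\<in>X. (\<Sum>y\<in>X. complex_of_real (A x y) * v y) = l * v x"
      by blast
    define w where "w = vec n (\<lambda>i. v (f i))"
    have "eigenvector B w l" unfolding eigenvector_def
    proof (intro conjI)
      show "w \<in> carrier_vec (dim_row B)" by (simp add: w_def B_def)
      obtain x where x: "x \<in> X" "v x \<noteq> 0" using v by blast
      have "x \<in> f ` {0..<n}" using f x(1) unfolding bij_betw_def by simp
      then obtain i where i: "i < n" "f i = x" by auto
      show "w \<noteq> 0\<^sub>v (dim_row B)"
      proof
        assume "w = 0\<^sub>v (dim_row B)"
        hence "w $ i = 0" using i by (simp add: B_def)
        thus False using i x by (simp add: w_def)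
      qed
      show "B *\<^sub>v w = l \<cdot>\<^sub>v w"
      proof (rule eq_vecI)
        fix i assume "i < dim_vec (l \<cdot>\<^sub>v w)"
        hence i: "i < n" by (simp add: w_def)
        have "(B *\<^sub>v w) $ i = (\<Sum>j\<in>{0..<n}. complex_of_real (A (f i) (f j)) * v (f j))"
          using i by (simp add: B_def w_def scalar_prod_def)
        also have "\<dots> = (\<Sum>y\<in>X. complex_of_real (A (f i) y) * v y)"
          by (rule sum.reindex_bij_betw[OF f])
        also have "\<dots> = l * v (f i)" using v(2) bij_betwE[OF f] i by simp
        finally show "(B *\<^sub>v w) $ i = (l \<cdot>\<^sub>v w) $ i" using i by (simp add: w_def)
      qed (simp add: B_def w_def)
    qed
    hence "eigenvalue B l" unfolding eigenvalue_def by blast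
    thus ?thesis using eigenvalue_root_char_poly[OF Bc] by simp
  qed
  moreover have "char_poly B \<noteq> 0" using degree_monic_char_poly[OF Bc] by auto
  ultimately show ?thesis using poly_roots_finite[of "char_poly B"]
    by (metis (mono_tags, lifting) finite_subset mem_Collect_eq subsetI)
qed

lemma eig_bound:
  assumes fin: "finite X" and dom: "\<forall>x\<in>X. \<forall>y\<in>X. \<bar>M x y\<bar> \<le> N x y"
    and le: "\<forall>v. ip X v (mv X N v) \<le> lm * ip X v v"
    and ev: "is_eigenvalue X M l"
  shows "cmod l \<le> lm"
proof -
  have "\<exists>v. (\<exists>x\<in>X. v x \<noteq> 0) \<and> (\<forall>x\<in>X. (\<Sum>y\<in>X. complex_of_real (M x y) * v y) = l * v x)"
    using ev unfolding is_eigenvalue_def by assumption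
  then obtain v where v: "\<exists>x\<in>X. v x \<noteq> 0" "\<forall>x\<in>X. (\<Sum>y\<in>X. complex_of_real (M x y) * v y) = l * v x"
    by blast
  define u where "u = (\<lambda>x. cmod (v x))"
  have pt: "cmod l * u x \<le> mv X N u x" if x: "x \<in> X" for x
  proof -
    have "cmod l * u x = cmod (\<Sum>y\<in>X. complex_of_real (M x y) * v y)"
      using v(2) x by (simp add: u_def norm_mult)
    also have "\<dots> \<le> (\<Sum>y\<in>X. cmod (complex_of_real (M x y) * v y))" by (rule norm_sum)
    also have "\<dots> = (\<Sum>y\<in>X. \<bar>M x y\<bar> * u y)" by (simp add: norm_mult u_def)
    also have "\<dots> \<le> (\<Sum>y\<in>X. N x y * u y)"
      using dom x by (intro sum_mono mult_right_mono) (auto simp: u_def)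
    finally show ?thesis by (simp add: mv_def)
  qed
  have "cmod l * ip X u u = ip X u (\<lambda>x. cmod l * u x)" by (simp add: ip_scale_r)
  also have "\<dots> \<le> ip X u (mv X N u)" unfolding ip_def
    using pt by (intro sum_mono mult_left_mono) (auto simp: u_def)
  also have "\<dots> \<le> lm * ip X u u" using le by blast
  finally have *: "cmod l * ip X u u \<le> lm * ip X u u" .
  obtain x where "x \<in> X" "u x \<noteq> 0" using v(1) by (auto simp: u_def)
  hence "ip X u u > 0" using nsq_pos[OF fin] by blast
  thus ?thesis using * by simp
qed

lemma real_eig:
  assumes "\<forall>x\<in>X. mv X M u x = lm * u x" "x0 \<in> X" "u x0 \<noteq> 0"
  shows "is_eigenvalue X M (complex_of_real lm)"
  unfolding is_eigenvalue_def
proof (intro exI[of _ "\<lambda>x. complex_of_real (u x)"] conjI ballI)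
  show "\<exists>x\<in>X. complex_of_real (u x) \<noteq> 0" using assms by auto
  fix x assume x: "x \<in> X"
  have "(\<Sum>y\<in>X. complex_of_real (M x y) * complex_of_real (u y)) = complex_of_real (mv X M u x)"
    by (simp add: mv_def)
  thus "(\<Sum>y\<in>X. complex_of_real (M x y) * complex_of_real (u y)) = complex_of_real lm * complex_of_real (u x)"
    using assms(1) x by simp
qed

lemma nsq1_nz: assumes "finite X" "ip X u u = 1" shows "\<exists>x\<in>X. u x \<noteq> 0"
proof (rule ccontr)
  assume "\<not> ?thesis"
  hence "ip X u u = 0" by (simp add: ip_def)
  thus False using assms by simp
qed

lemma eigset_fin: "finite X \<Longrightarrow> finite {cmod l |l. is_eigenvalue X M l}"
proof -
  assume "finite X"
  have "{cmod l |l. is_eigenvalue X M l} = cmod ` {l. is_eigenvalue X M l}" by auto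
  thus ?thesis using eig_finite[OF \<open>finite X\<close>, of M] by simp
qed

lemma spec_radius_le:
  assumes fin: "finite X" and ne: "X \<noteq> {}" and sM: "symm X M" and sN: "symm X N" and nN: "nonneg X N"
    and dom: "\<forall>x\<in>X. \<forall>y\<in>X. \<bar>M x y\<bar> \<le> N x y"
  shows "spectral_radius X M \<le> lmax X N"
proof -
  obtain u where u: "ip X u u = 1" "\<forall>x\<in>X. mv X M u x = lmax X M * u x"
    using sym_eig[OF fin ne sM] by blast
  obtain x0 where x0: "x0 \<in> X" "u x0 \<noteq> 0" using nsq1_nz[OF fin u(1)] by blast
  have "is_eigenvalue X M (complex_of_real (lmax X M))" by (rule real_eig[OF u(2) x0])
  hence ne': "{cmod l |l. is_eigenvalue X M l} \<noteq> {}" by blast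
  have le: "\<forall>v. ip X v (mv X N v) \<le> lmax X N * ip X v v" using lmax_props[OF fin ne] by blast
  show ?thesis unfolding spectral_radius_def
    using eigset_fin[OF fin, of M] ne' eig_bound[OF fin dom le] by (auto simp: Max_le_iff)
qed

lemma spec_radius_eq:
  assumes fin: "finite X" and ne: "X \<noteq> {}" and sN: "symm X N" and nN: "nonneg X N"
  shows "spectral_radius X N = lmax X N"
proof -
  obtain u where u: "ip X u u = 1" "\<forall>x. u x \<ge> 0" "\<forall>x\<in>X. mv X N u x = lmax X N * u x"
    using nonneg_eig(1)[OF fin ne sN nN] by blast
  obtain x0 where x0: "x0 \<in> X" "u x0 \<noteq> 0" using nsq1_nz[OF fin u(1)] by blast
  have ev: "is_eigenvalue X N (complex_of_real (lmax X N))" by (rule real_eig[OF u(3) x0])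
  have l0: "lmax X N \<ge> 0" using nonneg_eig(3)[OF fin ne sN nN] .
  have le: "\<forall>v. ip X v (mv X N v) \<le> lmax X N * ip X v v" using lmax_props[OF fin ne] by blast
  have dom: "\<forall>x\<in>X. \<forall>y\<in>X. \<bar>N x y\<bar> \<le> N x y" using nN by (auto simp: nonneg_def)
  show ?thesis unfolding spectral_radius_def
  proof (rule Max_eqI)
    show "finite {cmod l |l. is_eigenvalue X N l}" by (rule eigset_fin[OF fin])
    show "lmax X N \<in> {cmod l |l. is_eigenvalue X N l}" using ev l0
      by (auto intro!: exI[of _ "complex_of_real (lmax X N)"])
  qed (use eig_bound[OF fin dom le] in auto)
qed



definition Lc :: "'a set \<Rightarrow> 'a set \<Rightarrow> real" where
  "Lc x y = (if x \<inter> y \<noteq> {} then 1 else 0)"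
definition Ap :: "'a set \<Rightarrow> 'a set \<Rightarrow> real" where
  "Ap x y = (if conn_adj x y then 1 else 0)"
definition Da :: "'a set \<Rightarrow> 'a set \<Rightarrow> real" where
  "Da = mat_add abs_d (mat_transpose abs_d)"
definition Sop :: "'a set set \<Rightarrow> ('a set \<Rightarrow> real) \<Rightarrow> 'a \<Rightarrow> real" where
  "Sop E u a = (\<Sum>e\<in>E. if a \<in> e then u e else 0)"
definition Top :: "('a set \<Rightarrow> real) \<Rightarrow> 'a set \<Rightarrow> real" where
  "Top u e = (\<Sum>b\<in>e. u {b})"

lemma sg_E: "simple_graph V E \<Longrightarrow> e \<in> E \<Longrightarrow> e \<subseteq> V \<and> card e = 2 \<and> finite e \<and> e \<noteq> {}"
  unfolding simple_graph_def by (metis card.infinite card_0_eq zero_neq_numeral)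
lemma sg_fin: "simple_graph V E \<Longrightarrow> finite V \<and> finite E"
  unfolding simple_graph_def by (meson Pow_iff finite_Pow_iff rev_finite_subset subsetI)
lemma X_fin: "simple_graph V E \<Longrightarrow> finite (simplices V E)"
  using sg_fin unfolding simplices_def by auto
lemma X_ne: "simple_graph V E \<Longrightarrow> V \<noteq> {} \<Longrightarrow> simplices V E \<noteq> {}"
  unfolding simplices_def by auto
lemma X_cases: "x \<in> simplices V E \<Longrightarrow> (\<exists>a\<in>V. x = {a}) \<or> x \<in> E"
  unfolding simplices_def by auto
lemma sing_notin_E: "simple_graph V E \<Longrightarrow> {a} \<notin> E"
  using sg_E by fastforce
lemma X_elem_ne: "simple_graph V E \<Longrightarrow> x \<in> simplices V E \<Longrightarrow> x \<noteq> {}"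
  using X_cases sg_E by blast
lemma sing_in_X: "a \<in> V \<Longrightarrow> {a} \<in> simplices V E" unfolding simplices_def by auto
lemma E_in_X: "e \<in> E \<Longrightarrow> e \<in> simplices V E" unfolding simplices_def by auto

lemma sum_X:
  assumes "simple_graph V E"
  shows "(\<Sum>x\<in>simplices V E. g x) = (\<Sum>a\<in>V. g {a}) + (\<Sum>e\<in>E. g e)"
proof -
  have eq: "simplices V E = (\<lambda>a. {a}) ` V \<union> E" unfolding simplices_def by auto
  have d: "(\<lambda>a. {a}) ` V \<inter> E = {}" using sing_notin_E[OF assms] by auto
  have "(\<Sum>x\<in>simplices V E. g x) = (\<Sum>x\<in>(\<lambda>a. {a}) ` V. g x) + (\<Sum>e\<in>E. g e)"
    unfolding eq using sg_fin[OF assms] d by (intro sum.union_disjoint) auto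
  also have "(\<Sum>x\<in>(\<lambda>a. {a}) ` V. g x) = (\<Sum>a\<in>V. g {a})"
    by (subst sum.reindex) (auto simp: inj_on_def)
  finally show ?thesis .
qed

lemma Da_vv: "Da {a} {b} = 0"
  by (simp add: Da_def mat_add_def mat_transpose_def abs_d_def)
lemma Da_ve: "simple_graph V E \<Longrightarrow> e \<in> E \<Longrightarrow> Da {a} e = (if a \<in> e then 1 else 0)"
  using sg_E[of V E e] by (auto simp: Da_def mat_add_def mat_transpose_def abs_d_def)
lemma Da_ev: "simple_graph V E \<Longrightarrow> e \<in> E \<Longrightarrow> Da e {a} = (if a \<in> e then 1 else 0)"
  using sg_E[of V E e] by (auto simp: Da_def mat_add_def mat_transpose_def abs_d_def)
lemma Da_ee: "simple_graph V E \<Longrightarrow> e \<in> E \<Longrightarrow> f \<in> E \<Longrightarrow> Da e f = 0"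
  using sg_E[of V E e] sg_E[of V E f] by (auto simp: Da_def mat_add_def mat_transpose_def abs_d_def)

lemma D1: assumes sg: "simple_graph V E" shows "mv (simplices V E) Da v {a} = Sop E v a"
proof -
  have "mv (simplices V E) Da v {a} = (\<Sum>b\<in>V. Da {a} {b} * v {b}) + (\<Sum>e\<in>E. Da {a} e * v e)"
    by (simp add: mv_def sum_X[OF sg])
  also have "\<dots> = Sop E v a" unfolding Sop_def
    by (auto intro!: sum.cong simp: Da_vv Da_ve[OF sg])
  finally show ?thesis .
qed

lemma sum_if_subset: "finite A \<Longrightarrow> B \<subseteq> A \<Longrightarrow> (\<Sum>x\<in>A. if x \<in> B then g x else 0) = (\<Sum>x\<in>B. g x)"
proof -
  assume "finite A" "B \<subseteq> A"
  hence "A \<inter> B = B" by auto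
  thus ?thesis using sum.inter_restrict[OF \<open>finite A\<close>, of g B] by simp
qed

lemma D2: assumes sg: "simple_graph V E" and e: "e \<in> E" shows "mv (simplices V E) Da v e = Top v e"
proof -
  have "mv (simplices V E) Da v e = (\<Sum>b\<in>V. Da e {b} * v {b}) + (\<Sum>f\<in>E. Da e f * v f)"
    by (simp add: mv_def sum_X[OF sg])
  also have "\<dots> = (\<Sum>b\<in>V. if b \<in> e then v {b} else 0)"
    by (auto intro!: sum.cong simp: Da_ev[OF sg e] Da_ee[OF sg e])
  also have "\<dots> = Top v e" unfolding Top_def
    using sum_if_subset[of V e] sg_fin[OF sg] sg_E[OF sg e] by simp
  finally show ?thesis .
qed

lemma card_inter_E:
  assumes sg: "simple_graph V E" and e: "e \<in> E" and f: "f \<in> E"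
  shows "real (card (e \<inter> f)) = (if e \<inter> f \<noteq> {} then 1 else 0) + (if e = f then 1 else 0)"
proof (cases "e = f")
  case True thus ?thesis using sg_E[OF sg e] by auto
next
  case False
  have fe: "finite e" "card e = 2" "finite f" "card f = 2" using sg_E[OF sg e] sg_E[OF sg f] by auto
  have le: "card (e \<inter> f) \<le> 2" using card_mono[OF fe(1), of "e \<inter> f"] fe by auto
  have "card (e \<inter> f) \<noteq> 2"
  proof
    assume c: "card (e \<inter> f) = 2"
    have "e \<inter> f = e" using card_subset_eq[OF fe(1), of "e \<inter> f"] c fe by auto
    moreover have "e \<inter> f = f" using card_subset_eq[OF fe(3), of "e \<inter> f"] c fe by auto
    ultimately show False using False by auto
  qed
  hence "card (e \<inter> f) \<le> 1" using le by linarith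
  moreover have "e \<inter> f \<noteq> {} \<Longrightarrow> card (e \<inter> f) \<ge> 1" using fe
    by (simp add: Suc_leI card_gt_0_iff)
  ultimately show ?thesis using False by (cases "e \<inter> f = {}") auto
qed

lemma L1: assumes sg: "simple_graph V E" and a: "a \<in> V"
  shows "mv (simplices V E) Lc v {a} = v {a} + Sop E v a"
proof -
  have "mv (simplices V E) Lc v {a} = (\<Sum>b\<in>V. Lc {a} {b} * v {b}) + (\<Sum>e\<in>E. Lc {a} e * v e)"
    by (simp add: mv_def sum_X[OF sg])
  also have "(\<Sum>b\<in>V. Lc {a} {b} * v {b}) = (\<Sum>b\<in>V. if a = b then v {b} else 0)"
    by (rule sum.cong) (auto simp: Lc_def)
  also have "\<dots> = v {a}" using a sg_fin[OF sg] by simp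
  also have "(\<Sum>e\<in>E. Lc {a} e * v e) = Sop E v a"
    unfolding Sop_def by (rule sum.cong) (auto simp: Lc_def)
  finally show ?thesis .
qed

lemma L2: assumes sg: "simple_graph V E" and e: "e \<in> E"
  shows "mv (simplices V E) Lc v e = Top v e + (\<Sum>b\<in>e. Sop E v b) - v e"
proof -
  have fe: "finite e" "e \<subseteq> V" using sg_E[OF sg e] by auto
  have fE: "finite E" "finite V" using sg_fin[OF sg] by auto
  have "mv (simplices V E) Lc v e = (\<Sum>b\<in>V. Lc e {b} * v {b}) + (\<Sum>f\<in>E. Lc e f * v f)"
    by (simp add: mv_def sum_X[OF sg])
  also have "(\<Sum>b\<in>V. Lc e {b} * v {b}) = (\<Sum>b\<in>V. if b \<in> e then v {b} else 0)"
    by (rule sum.cong) (auto simp: Lc_def)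
  also have "\<dots> = Top v e" unfolding Top_def by (rule sum_if_subset[OF fE(2) fe(2)])
  also have "(\<Sum>f\<in>E. Lc e f * v f) = (\<Sum>b\<in>e. Sop E v b) - v e"
  proof -
    have "(\<Sum>b\<in>e. Sop E v b) = (\<Sum>f\<in>E. \<Sum>b\<in>e. if b \<in> f then v f else 0)"
      unfolding Sop_def by (rule sum.swap)
    also have "\<dots> = (\<Sum>f\<in>E. real (card (e \<inter> f)) * v f)"
    proof (rule sum.cong)
      fix f assume "f \<in> E"
      have "(\<Sum>b\<in>e. if b \<in> f then v f else 0) = (\<Sum>b\<in>e \<inter> f. v f)"
        using sum.inter_restrict[OF fe(1), of "\<lambda>_. v f" f] by simp
      thus "(\<Sum>b\<in>e. if b \<in> f then v f else 0) = real (card (e \<inter> f)) * v f" by simp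
    qed simp
    also have "\<dots> = (\<Sum>f\<in>E. Lc e f * v f + (if e = f then v f else 0))"
      by (rule sum.cong) (auto simp: card_inter_E[OF sg e] Lc_def algebra_simps)
    also have "\<dots> = (\<Sum>f\<in>E. Lc e f * v f) + v e"
      using fE e by (simp add: sum.distrib)
    finally show ?thesis by simp
  qed
  finally show ?thesis by simp
qed

lemma Sop_cong: "(\<And>e. e \<in> E \<Longrightarrow> u e = u' e) \<Longrightarrow> Sop E u a = Sop E u' a"
  unfolding Sop_def by (rule sum.cong) auto
lemma Sop_add: "Sop E (\<lambda>x. u x + w x) a = Sop E u a + Sop E w a"
  unfolding Sop_def by (simp add: sum.distrib[symmetric] cong: sum.cong) (rule sum.cong, auto)
lemma Sop_diff: "Sop E (\<lambda>x. u x - w x) a = Sop E u a - Sop E w a"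
  unfolding Sop_def by (simp add: sum_subtractf[symmetric]) (rule sum.cong, auto)
lemma Top_cong: "(\<And>b. b \<in> e \<Longrightarrow> u {b} = u' {b}) \<Longrightarrow> Top u e = Top u' e"
  unfolding Top_def by (rule sum.cong) auto

lemma mv_mat_mult: "mv X (mat_mult X A B) v x = mv X A (mv X B v) x"
proof -
  have "mv X (mat_mult X A B) v x = (\<Sum>y\<in>X. \<Sum>z\<in>X. A x z * B z y * v y)"
    by (simp add: mv_def mat_mult_def sum_distrib_right)
  also have "\<dots> = (\<Sum>z\<in>X. \<Sum>y\<in>X. A x z * B z y * v y)" by (rule sum.swap)
  also have "\<dots> = mv X A (mv X B v) x"
    by (simp add: mv_def sum_distrib_left mult.assoc)
  finally show ?thesis .
qed

lemma Habs_mv: "mv X (abs_hodge X) v x = mv X Da (mv X Da v) x"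
  unfolding abs_hodge_def Let_def Da_def[symmetric] by (rule mv_mat_mult)



lemma hydrogen:
  assumes sg: "simple_graph V E" and x: "x \<in> simplices V E"
  shows "mv (simplices V E) Lc (mv (simplices V E) Lc v) x = v x + mv (simplices V E) (abs_hodge (simplices V E)) (mv (simplices V E) Lc v) x"
    and "mv (simplices V E) Lc (mv (simplices V E) (abs_hodge (simplices V E)) v) x = mv (simplices V E) (abs_hodge (simplices V E)) (mv (simplices V E) Lc v) x"
proof -
  define X where "X = simplices V E"
  define w where "w = mv X Lc v"
  define SS where "SS = (\<lambda>e. \<Sum>b\<in>e. Sop E v b)"
  define h where "h = mv X (abs_hodge X) v"
  have xX: "x \<in> X" using x X_def by simp
  have Wv: "w {a} = v {a} + Sop E v a" if "a \<in> V" for a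
    unfolding w_def X_def using L1[OF sg that] .
  have We: "w e = Top v e + SS e - v e" if "e \<in> E" for e
    unfolding w_def X_def SS_def using L2[OF sg that] .
  have TopW: "Top w e = Top v e + SS e" if e: "e \<in> E" for e
  proof -
    have "Top w e = (\<Sum>b\<in>e. v {b} + Sop E v b)" unfolding Top_def
      using Wv sg_E[OF sg e] by (intro sum.cong) auto
    thus ?thesis by (simp add: sum.distrib Top_def SS_def)
  qed
  have SopW: "Sop E w b = Sop E (Top v) b + Sop E SS b - Sop E v b" for b
  proof -
    have "Sop E w b = Sop E (\<lambda>e. (Top v e + SS e) - v e) b" using We by (intro Sop_cong) auto
    thus ?thesis by (simp only: Sop_diff Sop_add)
  qed
  have DaV: "mv X Da u {a} = Sop E u a" for u a unfolding X_def by (rule D1[OF sg])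
  have DaE: "mv X Da u e = Top u e" if "e \<in> E" for u e unfolding X_def by (rule D2[OF sg that])
  have H: "mv X (abs_hodge X) u y = mv X Da (mv X Da u) y" for u y by (rule Habs_mv)
  have HWa: "mv X (abs_hodge X) w {a} = Sop E (Top v) a + Sop E SS a" for a
  proof -
    have "mv X (abs_hodge X) w {a} = Sop E (mv X Da w) a" by (simp add: H DaV)
    also have "\<dots> = Sop E (\<lambda>e. Top v e + SS e) a" using DaE TopW by (intro Sop_cong) auto
    finally show ?thesis by (simp only: Sop_add)
  qed
  have HWe: "mv X (abs_hodge X) w e = (\<Sum>b\<in>e. Sop E w b)" if e: "e \<in> E" for e
    by (simp add: H DaE[OF e] Top_def DaV)
  have ha: "h {a} = Sop E (Top v) a" for a
  proof -
    have "h {a} = Sop E (mv X Da v) a" by (simp add: h_def H DaV)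
    also have "\<dots> = Sop E (Top v) a" using DaE by (intro Sop_cong) auto
    finally show ?thesis .
  qed
  have he: "h e = SS e" if e: "e \<in> E" for e
    by (simp add: h_def H DaE[OF e] Top_def DaV SS_def)
  have "mv X Lc w x = v x + mv X (abs_hodge X) w x \<and> mv X Lc h x = mv X (abs_hodge X) w x"
  proof (cases "\<exists>a\<in>V. x = {a}")
    case True
    then obtain a where a: "a \<in> V" "x = {a}" by blast
    have L: "mv X Lc u {a} = u {a} + Sop E u a" for u unfolding X_def by (rule L1[OF sg a(1)])
    have "Sop E h a = Sop E SS a" using he by (intro Sop_cong) auto
    thus ?thesis using a by (simp add: L HWa Wv SopW ha)
  next
    case False
    hence e: "x \<in> E" using X_cases xX X_def by blast
    have L: "mv X Lc u x = Top u x + (\<Sum>b\<in>x. Sop E u b) - u x" for u unfolding X_def by (rule L2[OF sg e])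
    have "Top h x = (\<Sum>b\<in>x. Sop E (Top v) b)" by (simp add: Top_def ha)
    moreover have "(\<Sum>b\<in>x. Sop E h b) = (\<Sum>b\<in>x. Sop E SS b)"
      using he by (intro sum.cong refl Sop_cong) auto
    moreover have "(\<Sum>b\<in>x. Sop E w b) = (\<Sum>b\<in>x. Sop E (Top v) b) + (\<Sum>b\<in>x. Sop E SS b) - SS x"
      by (simp add: SopW sum.distrib sum_subtractf SS_def)
    ultimately show ?thesis using e by (simp add: L HWe TopW We he)
  qed
  thus "mv (simplices V E) Lc (mv (simplices V E) Lc v) x = v x + mv (simplices V E) (abs_hodge (simplices V E)) (mv (simplices V E) Lc v) x"
    and "mv (simplices V E) Lc (mv (simplices V E) (abs_hodge (simplices V E)) v) x = mv (simplices V E) (abs_hodge (simplices V E)) (mv (simplices V E) Lc v) x"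
    unfolding X_def w_def h_def by auto
qed



lemma Lc_Ap: assumes sg: "simple_graph V E" and x: "x \<in> simplices V E"
  shows "mv (simplices V E) Lc v x = v x + mv (simplices V E) Ap v x"
proof -
  have ne: "x \<noteq> {}" using X_elem_ne[OF sg x] .
  have "mv (simplices V E) Lc v x = (\<Sum>y\<in>simplices V E. (if x = y then v y else 0) + Ap x y * v y)"
    unfolding mv_def using ne by (intro sum.cong) (auto simp: Lc_def Ap_def conn_adj_def)
  also have "\<dots> = v x + mv (simplices V E) Ap v x"
    using x X_fin[OF sg] by (simp add: sum.distrib mv_def)
  finally show ?thesis .
qed

lemma Ap_symm: "symm X Ap" unfolding symm_def Ap_def conn_adj_def by auto
lemma Ap_nonneg: "nonneg X Ap" unfolding nonneg_def Ap_def by auto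

lemma mm_symm: "symm X D \<Longrightarrow> symm X (mat_mult X D D)"
  unfolding symm_def mat_mult_def by (auto intro!: sum.cong simp: mult.commute)

lemma Da_symm: "symm X Da" unfolding symm_def Da_def mat_add_def mat_transpose_def by auto
lemma Da_nonneg: "Da x y \<ge> 0" unfolding Da_def mat_add_def mat_transpose_def abs_d_def by auto

lemma Habs_symm: "symm X (abs_hodge X)"
  unfolding abs_hodge_def Let_def Da_def[symmetric] by (rule mm_symm[OF Da_symm])
lemma Habs_nonneg: "nonneg X (abs_hodge X)"
  unfolding nonneg_def abs_hodge_def Let_def Da_def[symmetric] mat_mult_def
  by (auto intro!: sum_nonneg simp: Da_nonneg)

lemma ext_d_abs: "\<bar>ext_d head x y\<bar> \<le> abs_d x y"
  unfolding ext_d_def abs_d_def by auto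

definition Dh :: "('a set \<Rightarrow> 'a) \<Rightarrow> 'a set \<Rightarrow> 'a set \<Rightarrow> real" where
  "Dh head = mat_add (ext_d head) (mat_transpose (ext_d head))"

lemma Dh_abs: "\<bar>Dh head x y\<bar> \<le> Da x y"
  unfolding Dh_def Da_def mat_add_def mat_transpose_def
  using ext_d_abs[of head x y] ext_d_abs[of head y x] by linarith

lemma H_symm: "symm X (hodge X head)"
proof -
  have "symm X (Dh head)" unfolding symm_def Dh_def mat_add_def mat_transpose_def by auto
  thus ?thesis unfolding hodge_def Let_def Dh_def[symmetric] by (rule mm_symm)
qed

lemma H_dom: "\<forall>x\<in>X. \<forall>y\<in>X. \<bar>hodge X head x y\<bar> \<le> abs_hodge X x y"
proof (intro ballI)
  fix x y
  have "\<bar>\<Sum>w\<in>X. Dh head x w * Dh head w y\<bar> \<le> (\<Sum>w\<in>X. \<bar>Dh head x w * Dh head w y\<bar>)" by (rule sum_abs)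
  also have "\<dots> \<le> (\<Sum>w\<in>X. Da x w * Da w y)"
    by (intro sum_mono) (auto simp: abs_mult intro!: mult_mono Dh_abs Da_nonneg)
  finally show "\<bar>hodge X head x y\<bar> \<le> abs_hodge X x y"
    unfolding hodge_def abs_hodge_def Let_def Dh_def[symmetric] Da_def[symmetric] mat_mult_def .
qed

lemma walks_0: assumes "x \<in> X" shows "walks X 0 x = {[x]}"
proof
  show "walks X 0 x \<subseteq> {[x]}"
  proof
    fix w assume "w \<in> walks X 0 x"
    hence "length w = 1" "w ! 0 = x" unfolding walks_def by auto
    thus "w \<in> {[x]}" by (cases w) auto
  qed
  show "{[x]} \<subseteq> walks X 0 x" using assms unfolding walks_def by auto
qed

lemma walks_Suc: assumes x: "x \<in> X"
  shows "walks X (Suc k) x = (\<Union>y\<in>{y\<in>X. conn_adj x y}. (\<lambda>w. x # w) ` walks X k y)"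
proof
  show "walks X (Suc k) x \<subseteq> (\<Union>y\<in>{y\<in>X. conn_adj x y}. (\<lambda>w. x # w) ` walks X k y)"
  proof
    fix w assume w: "w \<in> walks X (Suc k) x"
    hence l: "length w = Suc (Suc k)" unfolding walks_def by simp
    then obtain z w' where zw: "w = z # w'" by (cases w) auto
    have l': "length w' = Suc k" using l zw by simp
    have z: "z = x" using w zw unfolding walks_def by simp
    have sw: "set w' \<subseteq> X" using w zw unfolding walks_def by auto
    have adj: "\<forall>i<Suc k. conn_adj (w ! i) (w ! Suc i)" using w unfolding walks_def by simp
    have y: "w' ! 0 \<in> X" using sw l' by (metis nth_mem subsetD zero_less_Suc)
    have c0: "conn_adj x (w' ! 0)" using adj[rule_format, of 0] zw z by simp
    have "w' \<in> walks X k (w' ! 0)" unfolding walks_def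
    proof (intro CollectI conjI allI impI)
      fix i assume "i < k"
      thus "conn_adj (w' ! i) (w' ! Suc i)" using adj[rule_format, of "Suc i"] zw by simp
    qed (use l' sw in auto)
    thus "w \<in> (\<Union>y\<in>{y\<in>X. conn_adj x y}. (\<lambda>w. x # w) ` walks X k y)"
      using y c0 zw z by blast
  qed
  show "(\<Union>y\<in>{y\<in>X. conn_adj x y}. (\<lambda>w. x # w) ` walks X k y) \<subseteq> walks X (Suc k) x"
  proof
    fix w assume "w \<in> (\<Union>y\<in>{y\<in>X. conn_adj x y}. (\<lambda>w. x # w) ` walks X k y)"
    then obtain y w' where y: "y \<in> X" "conn_adj x y" and w': "w' \<in> walks X k y" and ww: "w = x # w'"
      by blast
    have l': "length w' = Suc k" "w' ! 0 = y" "set w' \<subseteq> X" "\<forall>i<k. conn_adj (w' ! i) (w' ! Suc i)"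
      using w' unfolding walks_def by auto
    show "w \<in> walks X (Suc k) x" unfolding walks_def
    proof (intro CollectI conjI allI impI)
      fix i assume i: "i < Suc k"
      show "conn_adj (w ! i) (w ! Suc i)"
      proof (cases i)
        case 0 thus ?thesis using ww y l' by simp
      next
        case (Suc j) thus ?thesis using ww l' i by simp
      qed
    qed (use ww l' x in auto)
  qed
qed

lemma walks_fin: assumes "finite X" shows "finite (walks X k x)"
proof -
  have "walks X k x \<subseteq> {w. set w \<subseteq> X \<and> length w = Suc k}" unfolding walks_def by auto
  thus ?thesis using finite_lists_length_eq[OF assms] by (rule finite_subset)
qed

lemma num_walks_Suc: assumes fin: "finite X" and x: "x \<in> X"
  shows "real (num_walks X (Suc k) x) = mv X Ap (\<lambda>y. real (num_walks X k y)) x"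
proof -
  let ?I = "{y\<in>X. conn_adj x y}"
  have "num_walks X (Suc k) x = card (\<Union>y\<in>?I. (\<lambda>w. x # w) ` walks X k y)"
    unfolding num_walks_def walks_Suc[OF x] ..
  also have "\<dots> = (\<Sum>y\<in>?I. card ((\<lambda>w. x # w) ` walks X k y))"
  proof (rule card_UN_disjoint)
    show "finite ?I" using fin by simp
    show "\<forall>y\<in>?I. finite ((\<lambda>w. x # w) ` walks X k y)" using walks_fin[OF fin] by blast
    show "\<forall>y\<in>?I. \<forall>z\<in>?I. y \<noteq> z \<longrightarrow> (\<lambda>w. x # w) ` walks X k y \<inter> (\<lambda>w. x # w) ` walks X k z = {}"
      unfolding walks_def by auto
  qed
  also have "\<dots> = (\<Sum>y\<in>?I. num_walks X k y)"
    unfolding num_walks_def by (intro sum.cong refl card_image) (simp add: inj_on_def)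
  finally have "real (num_walks X (Suc k) x) = (\<Sum>y\<in>?I. real (num_walks X k y))" by simp
  also have "\<dots> = (\<Sum>y\<in>X. if conn_adj x y then real (num_walks X k y) else 0)"
    using fin by (simp add: sum.inter_filter)
  also have "\<dots> = mv X Ap (\<lambda>y. real (num_walks X k y)) x"
    unfolding mv_def Ap_def by (intro sum.cong) auto
  finally show ?thesis .
qed

lemma num_walks_0: "x \<in> X \<Longrightarrow> num_walks X 0 x = 1"
  unfolding num_walks_def by (simp add: walks_0)



lemma op_bound:
  assumes sy: "symm X M" and a0: "a \<ge> 0" and ab: "\<forall>v. \<bar>ip X v (mv X M v)\<bar> \<le> a * ip X v v"
  shows "ip X (mv X M g) (mv X M g) \<le> a^2 * ip X g g"
proof -
  define h where "h = mv X M g"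
  define n where "n = ip X h h"
  have n0: "n \<ge> 0" unfolding n_def by (rule nsq_nonneg)
  have main: "4 * c * n \<le> a * (2 * ip X g g + 2 * c^2 * n)" for c
  proof -
    have p: "ip X (\<lambda>x. g x + c * h x) (mv X M (\<lambda>x. g x + c * h x)) \<le> a * ip X (\<lambda>x. g x + c * h x) (\<lambda>x. g x + c * h x)"
      using ab by (metis abs_le_D1)
    have m: "- ip X (\<lambda>x. g x + (-c) * h x) (mv X M (\<lambda>x. g x + (-c) * h x)) \<le> a * ip X (\<lambda>x. g x + (-c) * h x) (\<lambda>x. g x + (-c) * h x)"
      using ab by (metis abs_le_D2)
    have hh: "ip X h (mv X M g) = n" unfolding n_def h_def ..
    have hh2: "ip X h h = n" unfolding n_def ..
    define Q where "Q = ip X g (mv X M g)"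
    define R where "R = ip X h (mv X M h)"
    define G where "G = ip X g g"
    define S where "S = ip X h g"
    have p': "Q + 2*(c*n) + c^2*R \<le> a*G + 2*(a*c*S) + a*c^2*n"
      using p unfolding qf_expand[OF sy] nsq_expand hh hh2 Q_def R_def G_def S_def
      by (simp add: algebra_simps)
    have m': "- Q + 2*(c*n) - c^2*R \<le> a*G - 2*(a*c*S) + a*c^2*n"
      using m unfolding qf_expand[OF sy] nsq_expand hh hh2 Q_def R_def G_def S_def
      by (simp add: algebra_simps)
    have "4 * (c * n) \<le> 2 * (a * G) + 2 * (a * c^2 * n)" using p' m' by linarith
    thus ?thesis unfolding G_def by (simp add: algebra_simps)
  qed
  show ?thesis
  proof (cases "a = 0")
    case True
    have "4 * 1 * n \<le> 0" using main[of 1] True by simp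
    hence "n \<le> 0" by simp
    thus ?thesis using True unfolding n_def h_def by simp
  next
    case False
    hence ap: "a > 0" using a0 by simp
    have "4 * (1/a) * n \<le> a * (2 * ip X g g + 2 * (1/a)^2 * n)" by (rule main)
    hence "4 * n \<le> a * (a * (2 * ip X g g + 2 * (1/a)^2 * n))" using ap
      by (simp add: field_simps)
    also have "\<dots> = 2 * a^2 * ip X g g + 2 * n" using ap by (simp add: field_simps power2_eq_square)
    finally show ?thesis unfolding n_def h_def by simp
  qed
qed

lemma walk_bounds:
  assumes sg: "simple_graph V E" and ne: "V \<noteq> {}"
  shows "(lmax (simplices V E) Ap)^k \<le> real (max_walks (simplices V E) k) \<and>
         real (max_walks (simplices V E) k) \<le> (lmax (simplices V E) Ap)^k * sqrt (real (card (simplices V E)))"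
proof -
  define X where "X = simplices V E"
  define a where "a = lmax X Ap"
  define f where "f = (\<lambda>k y. real (num_walks X k y))"
  have fin: "finite X" and neX: "X \<noteq> {}" using X_fin[OF sg] X_ne[OF sg ne] X_def by auto
  have a0: "a \<ge> 0" and ab: "\<forall>v. \<bar>ip X v (mv X Ap v)\<bar> \<le> a * ip X v v"
    using nonneg_eig(2,3)[OF fin neX Ap_symm Ap_nonneg] a_def by auto
  obtain u where u: "ip X u u = 1" "\<forall>x. u x \<ge> 0" "\<forall>x\<in>X. mv X Ap u x = a * u x"
    using nonneg_eig(1)[OF fin neX Ap_symm Ap_nonneg] a_def by auto
  have fS: "f (Suc k) x = mv X Ap (f k) x" if "x \<in> X" for k x
    unfolding f_def using num_walks_Suc[OF fin that] .
  have f0: "f 0 x = 1" if "x \<in> X" for x unfolding f_def using num_walks_0[OF that] by simp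
  have mvmono: "mv X Ap g x \<le> mv X Ap g' x" if "\<forall>y\<in>X. g y \<le> g' y" for g g' x
    unfolding mv_def using that by (intro sum_mono mult_left_mono) (auto simp: Ap_def)
  have Pge: "f k x \<le> real (max_walks X k)" if "x \<in> X" for k x
    unfolding f_def max_walks_def using fin that by simp
  have "Max (num_walks X k ` X) \<in> num_walks X k ` X" using Max_in[of "num_walks X k ` X"] fin neX by auto
  then obtain x1 where x1: "x1 \<in> X" "max_walks X k = num_walks X k x1"
    unfolding max_walks_def by auto
  define m where "m = Max (u ` X)"
  have "m \<in> u ` X" unfolding m_def using Max_in[of "u ` X"] fin neX by auto
  then obtain x0 where x0: "x0 \<in> X" "u x0 = m" by auto
  have um: "u x \<le> m" if "x \<in> X" for x unfolding m_def using fin that by simp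
  obtain xn where xn: "xn \<in> X" "u xn \<noteq> 0" using nsq1_nz[OF fin u(1)] by blast
  have mpos: "m > 0" using um[OF xn(1)] xn(2) u(2)[rule_format, of xn] by linarith
  have low: "\<forall>x\<in>X. a^k * u x \<le> m * f k x" for k
  proof (induction k)
    case 0 thus ?case using um f0 by simp
  next
    case (Suc k)
    show ?case
    proof
      fix x assume x: "x \<in> X"
      have "a^Suc k * u x = a^k * mv X Ap u x" using u(3) x by simp
      also have "\<dots> = mv X Ap (\<lambda>y. a^k * u y) x" by (simp add: mv_scale)
      also have "\<dots> \<le> mv X Ap (\<lambda>y. m * f k y) x" using Suc by (intro mvmono) auto
      also have "\<dots> = m * f (Suc k) x" using fS[OF x] by (simp add: mv_scale)
      finally show "a^Suc k * u x \<le> m * f (Suc k) x" .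
    qed
  qed
  have "a^k * u x0 \<le> m * f k x0" using low[of k] x0(1) by blast
  hence "m * a^k \<le> m * f k x0" using x0(2) by (simp add: mult.commute)
  hence "a^k \<le> f k x0" using mpos by simp
  hence L: "a^k \<le> real (max_walks X k)" using Pge[OF x0(1), of k] by linarith
  have nsqf: "ip X (f k) (f k) \<le> a^(2*k) * real (card X)" for k
  proof (induction k)
    case 0
    have "ip X (f 0) (f 0) = real (card X)" unfolding ip_def using f0 by simp
    thus ?case by simp
  next
    case (Suc k)
    have "ip X (f (Suc k)) (f (Suc k)) = ip X (mv X Ap (f k)) (mv X Ap (f k))"
      using fS by (intro ip_cong) auto
    also have "\<dots> \<le> a^2 * ip X (f k) (f k)" by (rule op_bound[OF Ap_symm a0 ab])
    also have "\<dots> \<le> a^2 * (a^(2*k) * real (card X))" using Suc a0 by (intro mult_left_mono) auto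
    also have "\<dots> = a^(2 * Suc k) * real (card X)" by (simp add: power_add power_mult power2_eq_square)
    finally show ?case .
  qed
  define P where "P = real (max_walks X k)"
  have "P^2 = f k x1 * f k x1" unfolding P_def f_def using x1 by (simp add: power2_eq_square)
  also have "\<dots> \<le> ip X (f k) (f k)" unfolding ip_def
    using fin x1(1) by (intro member_le_sum) auto
  also have "\<dots> \<le> (a^k)^2 * real (card X)" using nsqf[of k] by (simp add: power_mult mult.commute)
  finally have "sqrt (P^2) \<le> sqrt ((a^k)^2 * real (card X))" by (rule real_sqrt_le_mono)
  hence "P \<le> a^k * sqrt (real (card X))" using a0 by (simp add: P_def real_sqrt_mult)
  thus ?thesis using L unfolding P_def X_def a_def by simp
qed

lemma spec_main:
  assumes sg: "simple_graph V E" and ne: "V \<noteq> {}"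
  shows "lmax (simplices V E) (abs_hodge (simplices V E)) =
     (1 + lmax (simplices V E) Ap) - 1 / (1 + lmax (simplices V E) Ap)"
proof -
  define X where "X = simplices V E"
  define a where "a = lmax X Ap"
  define C where "C = 1 + a"
  define mu where "mu = lmax X (abs_hodge X)"
  have fin: "finite X" and neX: "X \<noteq> {}" using X_fin[OF sg] X_ne[OF sg ne] X_def by auto
  have a0: "a \<ge> 0" and ab: "\<forall>v. \<bar>ip X v (mv X Ap v)\<bar> \<le> a * ip X v v"
    using nonneg_eig(2,3)[OF fin neX Ap_symm Ap_nonneg] a_def by auto
  have Cpos: "C > 0" "C \<ge> 1" using a0 C_def by auto
  have hyd1: "mv X Lc (mv X Lc v) x = v x + mv X (abs_hodge X) (mv X Lc v) x" if "x \<in> X" for v x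
    using hydrogen(1)[OF sg, of x v] that X_def by simp
  have hyd2: "mv X Lc (mv X (abs_hodge X) v) x = mv X (abs_hodge X) (mv X Lc v) x" if "x \<in> X" for v x
    using hydrogen(2)[OF sg, of x v] that X_def by simp
  have LA: "mv X Lc v x = v x + mv X Ap v x" if "x \<in> X" for v x
    using Lc_Ap[OF sg, of x v] that X_def by simp
  have qfL: "ip X y (mv X Lc y) = ip X y y + ip X y (mv X Ap y)" for y
  proof -
    have "ip X y (mv X Lc y) = ip X y (\<lambda>x. y x + mv X Ap y x)" using LA by (intro ip_cong) auto
    thus ?thesis by (simp add: ip_add_r)
  qed
  have leH: "\<forall>v. ip X v (mv X (abs_hodge X) v) \<le> mu * ip X v v"
    using lmax_props[OF fin neX] mu_def by blast
  obtain uA where uA: "ip X uA uA = 1" "\<forall>x\<in>X. mv X Ap uA x = a * uA x"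
    using nonneg_eig(1)[OF fin neX Ap_symm Ap_nonneg] a_def by auto
  have LuA: "mv X Lc uA x = C * uA x" if "x \<in> X" for x using LA[OF that] uA(2) that C_def
    by (simp add: algebra_simps)
  have HuA: "mv X (abs_hodge X) uA x = (C - 1/C) * uA x" if x: "x \<in> X" for x
  proof -
    have "mv X Lc (mv X Lc uA) x = mv X Lc (\<lambda>y. C * uA y) x" using LuA by (intro mv_cong) auto
    hence e1: "mv X Lc (mv X Lc uA) x = C * C * uA x" using LuA[OF x] by (simp add: mv_scale)
    have "mv X (abs_hodge X) (mv X Lc uA) x = mv X (abs_hodge X) (\<lambda>y. C * uA y) x"
      using LuA by (intro mv_cong) auto
    hence e2: "mv X (abs_hodge X) (mv X Lc uA) x = C * mv X (abs_hodge X) uA x" by (simp add: mv_scale)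
    have "C * C * uA x = uA x + C * mv X (abs_hodge X) uA x" using hyd1[OF x, of uA] e1 e2 by simp
    thus ?thesis using Cpos by (simp add: field_simps)
  qed
  have "ip X uA (mv X (abs_hodge X) uA) = ip X uA (\<lambda>x. (C - 1/C) * uA x)"
    using HuA by (intro ip_cong) auto
  hence "ip X uA (mv X (abs_hodge X) uA) = C - 1/C" using uA(1) by (simp add: ip_scale_r)
  hence s1: "C - 1/C \<le> mu" using leH uA(1) by (metis mult.right_neutral)
  have mu0: "mu \<ge> 0" using nonneg_eig(3)[OF fin neX Habs_symm Habs_nonneg] mu_def by simp
  obtain uH where uH: "ip X uH uH = 1" "\<forall>x. uH x \<ge> 0" "\<forall>x\<in>X. mv X (abs_hodge X) uH x = mu * uH x"
    using nonneg_eig(1)[OF fin neX Habs_symm Habs_nonneg] mu_def by auto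
  define r where "r = (mu + sqrt (mu^2 + 4)) / 2"
  have rpos: "r > 0" unfolding r_def using mu0 by (simp add: add_nonneg_pos)
  have "sqrt (mu^2 + 4) ^ 2 = mu^2 + 4" by simp
  hence r2: "r * r = mu * r + 1" unfolding r_def by (simp add: field_simps power2_eq_square)
  hence rmu: "mu + 1/r = r" using rpos by (simp add: field_simps)
  define y where "y = (\<lambda>x. mv X Lc uH x + (1/r) * uH x)"
  have Ly: "mv X Lc y x = r * y x" if x: "x \<in> X" for x
  proof -
    have "mv X Lc y x = mv X Lc (mv X Lc uH) x + (1/r) * mv X Lc uH x"
      unfolding y_def by (simp only: mv_add mv_scale)
    also have "mv X Lc (mv X Lc uH) x = uH x + mv X Lc (mv X (abs_hodge X) uH) x"
      using hyd1[OF x] hyd2[OF x] by simp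
    also have "mv X Lc (mv X (abs_hodge X) uH) x = mv X Lc (\<lambda>z. mu * uH z) x"
      using uH(3) by (intro mv_cong) auto
    also have "\<dots> = mu * mv X Lc uH x" by (simp add: mv_scale)
    finally have "mv X Lc y x = uH x + (mu + 1/r) * mv X Lc uH x" by (simp add: algebra_simps)
    thus ?thesis unfolding rmu y_def using rpos by (simp add: algebra_simps)
  qed
  have "ip X uH (mv X Ap uH) \<ge> 0" by (simp add: qf_double uH(2) sum_nonneg Ap_def)
  moreover have "ip X uH y = ip X uH (mv X Lc uH) + (1/r) * ip X uH uH" unfolding y_def
    by (simp only: ip_add_r ip_scale_r)
  ultimately have "ip X uH y \<ge> 1 + 1/r" using uH(1) qfL[of uH] by simp
  hence "ip X uH y \<noteq> 0" using rpos by (smt (verit) divide_pos_pos)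
  then obtain xy where xy: "xy \<in> X" "y xy \<noteq> 0" unfolding ip_def
    by (metis (no_types, lifting) mult_zero_right sum.neutral)
  have ny: "ip X y y > 0" using nsq_pos[OF fin xy(1), of y] xy(2) by blast
  have "ip X y (mv X Lc y) = ip X y (\<lambda>x. r * y x)" using Ly by (intro ip_cong) auto
  hence "r * ip X y y = ip X y y + ip X y (mv X Ap y)" using qfL[of y] by (simp add: ip_scale_r)
  also have "\<dots> \<le> ip X y y + a * ip X y y" using ab by (metis abs_le_D1 add_left_mono)
  finally have "r * ip X y y \<le> C * ip X y y" unfolding C_def by (simp add: algebra_simps)
  hence rC: "r \<le> C" using ny by simp
  have "mu = r - 1/r" using rmu by simp
  also have "\<dots> \<le> C - 1/C" using rC rpos by (simp add: frac_le diff_mono)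
  finally have "mu \<le> C - 1/C" .
  with s1 show ?thesis unfolding mu_def C_def a_def X_def by simp
qed



theorem mainTheorem4:
  fixes V :: "'a set" and E :: "'a set set" and head :: "'a set \<Rightarrow> 'a"
  assumes "simple_graph V E" and "V \<noteq> {}"
    and "\<forall>e\<in>E. head e \<in> e"
  shows "(\<forall>k\<ge>1. spectral_radius (simplices V E) (hodge (simplices V E) head)
             \<le> r_seq (simplices V E) k - 1 / r_seq (simplices V E) k)
       \<and> (\<lambda>k. r_seq (simplices V E) k - 1 / r_seq (simplices V E) k)
            \<longlonglongrightarrow> spectral_radius (simplices V E) (abs_hodge (simplices V E))"
proof -
  note sg = assms(1) and ne = assms(2)
  define X where "X = simplices V E"
  define a where "a = lmax X Ap"
  define C where "C = 1 + a"
  define P where "P = (\<lambda>k. real (max_walks X k))"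
  define N where "N = real (card X)"
  have fin: "finite X" and neX: "X \<noteq> {}" using X_fin[OF sg] X_ne[OF sg ne] X_def by auto
  have a0: "a \<ge> 0" using nonneg_eig(3)[OF fin neX Ap_symm Ap_nonneg] a_def by auto
  have Cpos: "C > 0" "C \<ge> 1" using a0 C_def by auto
  have mu: "lmax X (abs_hodge X) = C - 1/C" using spec_main[OF sg ne] X_def a_def C_def by simp
  have sHabs: "spectral_radius X (abs_hodge X) = C - 1/C"
    using spec_radius_eq[OF fin neX Habs_symm Habs_nonneg] mu by simp
  have sH: "spectral_radius X (hodge X head) \<le> C - 1/C"
    using spec_radius_le[OF fin neX H_symm Habs_symm Habs_nonneg H_dom] mu by simp
  have wb: "a^k \<le> P k \<and> P k \<le> a^k * sqrt N" for k
    using walk_bounds[OF sg ne, of k] unfolding X_def[symmetric] a_def[symmetric] P_def N_def by simp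
  have Npos: "N > 0" unfolding N_def using fin neX by (simp add: card_gt_0_iff)
  have rge: "a \<le> root k (P k)" if k: "k \<ge> 1" for k
  proof -
    have h: "root k (a^k) \<le> root k (P k)" using wb[of k] k by (intro real_root_le_mono) auto
    have e: "root k (a^k) = a" using real_root_power_cancel[of k a] k a0 by simp
    from h e show ?thesis by linarith
  qed
  have rle: "root k (P k) \<le> a * root k (sqrt N)" if k: "k \<ge> 1" for k
  proof -
    have "root k (P k) \<le> root k (a^k * sqrt N)" using wb[of k] k by (intro real_root_le_mono) auto
    also have "\<dots> = root k (a^k) * root k (sqrt N)" by (rule real_root_mult)
    also have "\<dots> = a * root k (sqrt N)" using real_root_power_cancel[of k a] k a0 by simp
    finally show ?thesis .
  qed
  have rs: "r_seq X k = 1 + root k (P k)" for k unfolding r_seq_def P_def ..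
  have part1: "\<forall>k\<ge>1. spectral_radius X (hodge X head) \<le> r_seq X k - 1 / r_seq X k"
  proof (intro allI impI)
    fix k :: nat assume k: "k \<ge> 1"
    have rC: "C \<le> r_seq X k" using rge[OF k] rs[of k] C_def by simp
    hence "1 / r_seq X k \<le> 1 / C" using Cpos by (intro divide_left_mono) auto
    hence "C - 1/C \<le> r_seq X k - 1 / r_seq X k" using rC by linarith
    thus "spectral_radius X (hodge X head) \<le> r_seq X k - 1 / r_seq X k" using sH by linarith
  qed
  have lim_root: "(\<lambda>k. root k (P k)) \<longlonglongrightarrow> a"
  proof (rule tendsto_sandwich[of "\<lambda>_. a" _ _ "\<lambda>k. a * root k (sqrt N)"])
    show "\<forall>\<^sub>F k in sequentially. a \<le> root k (P k)"
      using rge by (auto simp: eventually_sequentially)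
    show "\<forall>\<^sub>F k in sequentially. root k (P k) \<le> a * root k (sqrt N)"
      using rle by (auto simp: eventually_sequentially)
    show "(\<lambda>k. a) \<longlonglongrightarrow> a" by simp
    have "(\<lambda>k. a * root k (sqrt N)) \<longlonglongrightarrow> a * 1"
      using LIMSEQ_root_const[of "sqrt N"] Npos by (intro tendsto_mult_left) auto
    thus "(\<lambda>k. a * root k (sqrt N)) \<longlonglongrightarrow> a" by simp
  qed
  have "(\<lambda>k. r_seq X k) \<longlonglongrightarrow> C" unfolding rs C_def by (intro tendsto_add tendsto_const lim_root)
  hence "(\<lambda>k. r_seq X k - 1 / r_seq X k) \<longlonglongrightarrow> C - 1 / C"
    using Cpos by (intro tendsto_diff tendsto_divide tendsto_const) auto
  hence part2: "(\<lambda>k. r_seq X k - 1 / r_seq X k) \<longlonglongrightarrow> spectral_radius X (abs_hodge X)"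
    using sHabs by simp
  show ?thesis using part1 part2 unfolding X_def by blast
qed

end
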